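(* Let $\mathrm{TM}_{1state}$ denote the class of languages $L(M)$ recognized by one-state Turing machines $M$. Then: (i) there exists a regular language that is not in $\mathrm{TM}_{1state}$, for example $\{1\}$; (ii) there exists a language in $\mathrm{TM}_{1state}$ that is not context-free.
   Context: A one-state Turing machine is a tuple $\langle \{q\}, \Sigma, \Gamma, q, H, \delta\rangle$ with the following components: a unique state $q$; an input alphabet $\Sigma$ not containing the blank symbol $\sqcup$; a tape alphabet $\Gamma\supseteq\Sigma\cup\{\sqcup\}$; a set of halting symbols $H\subseteq\Gamma$; and a transition function $\delta:\Gamma\setminus H\to\Gamma\times\{L,R\}$. The tape is infinite in both directions. On input $x\in\Sigma^*$, the tape holds $x$ with blanks everywhere else, and the head starts on the leftmost symbol of $x$ (on a blank cell if $x$ is empty). At each step, if the scanned symbol is in $H$, the machine halts. Otherwise, with $\delta(a)=(b,D)$ for the scanned symbol $a$, it writes $b$ and moves one cell in direction $D$. The language recognized by $M$ is $L(M)=\{x\in\Sigma^*\mid M\text{ halts on input }x\}$. *)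

theory Defs
  imports Main
begin

(* Symbols (input symbols, tape symbols, DFA states, grammar symbols) are encoded
   as natural numbers; any finite alphabet can be so encoded. *)

datatype move = MoveL | MoveR

record tm1 =
  tm_sigma :: "nat set"
  tm_gamma :: "nat set"
  tm_blank :: nat
  tm_halt  :: "nat set"
  tm_delta :: "nat \<Rightarrow> nat \<times> move"   (* transition function, relevant on gamma - H *)

definition wf_tm1 :: "tm1 \<Rightarrow> bool" where
  "wf_tm1 M \<longleftrightarrow> finite (tm_gamma M) \<and> tm_sigma M \<subseteq> tm_gamma M \<and>
     tm_blank M \<in> tm_gamma M \<and> tm_blank M \<notin> tm_sigma M \<and>
     tm_halt M \<subseteq> tm_gamma M \<and>
     (\<forall>a \<in> tm_gamma M - tm_halt M. fst (tm_delta M a) \<in> tm_gamma M)"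

(* configuration: tape contents and head position *)
type_synonym config = "(int \<Rightarrow> nat) \<times> int"

definition init_config :: "tm1 \<Rightarrow> nat list \<Rightarrow> config" where
  "init_config M x =
     ((\<lambda>i. if 0 \<le> i \<and> i < int (length x) then x ! nat i else tm_blank M), 0)"

definition step_tm1 :: "tm1 \<Rightarrow> config \<Rightarrow> config" where
  "step_tm1 M c = (let (tape, p) = c; (b, d) = tm_delta M (tape p) in
     (tape(p := b), if d = MoveL then p - 1 else p + 1))"

definition halts_tm1 :: "tm1 \<Rightarrow> nat list \<Rightarrow> bool" where
  "halts_tm1 M x \<longleftrightarrow>
     (\<exists>n. let (tape, p) = (step_tm1 M ^^ n) (init_config M x) in tape p \<in> tm_halt M)"

definition lang_tm1 :: "tm1 \<Rightarrow> nat list set" where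
  "lang_tm1 M = {x \<in> lists (tm_sigma M). halts_tm1 M x}"

definition TM_1state :: "nat list set set" where
  "TM_1state = {L. \<exists>M. wf_tm1 M \<and> L = lang_tm1 M}"

record dfa =
  dfa_states :: "nat set"
  dfa_alpha  :: "nat set"
  dfa_start  :: nat
  dfa_final  :: "nat set"
  dfa_trans  :: "nat \<Rightarrow> nat \<Rightarrow> nat"

definition wf_dfa :: "dfa \<Rightarrow> bool" where
  "wf_dfa A \<longleftrightarrow> finite (dfa_states A) \<and> finite (dfa_alpha A) \<and>
     dfa_start A \<in> dfa_states A \<and> dfa_final A \<subseteq> dfa_states A \<and>
     (\<forall>q \<in> dfa_states A. \<forall>a \<in> dfa_alpha A. dfa_trans A q a \<in> dfa_states A)"

definition lang_dfa :: "dfa \<Rightarrow> nat list set" where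
  "lang_dfa A = {w \<in> lists (dfa_alpha A). foldl (dfa_trans A) (dfa_start A) w \<in> dfa_final A}"

definition regular :: "nat list set \<Rightarrow> bool" where
  "regular L \<longleftrightarrow> (\<exists>A. wf_dfa A \<and> lang_dfa A = L)"

(* Context-free languages: languages of context-free grammars.
   Symbols: Inl A = nonterminal A, Inr a = terminal a. *)
type_synonym cfg = "(nat \<times> (nat + nat) list) set \<times> nat"   (* productions, start symbol *)

definition cfg_step :: "(nat \<times> (nat + nat) list) set \<Rightarrow> ((nat + nat) list \<times> (nat + nat) list) set" where
  "cfg_step P = {(u @ [Inl A] @ v, u @ \<alpha> @ v) | u v A \<alpha>. (A, \<alpha>) \<in> P}"

definition lang_cfg :: "cfg \<Rightarrow> nat list set" where
  "lang_cfg G = {w. ([Inl (snd G)], map Inr w) \<in> (cfg_step (fst G))\<^sup>*}"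

definition context_free :: "nat list set \<Rightarrow> bool" where
  "context_free L \<longleftrightarrow> (\<exists>G. finite (fst G) \<and> lang_cfg G = L)"

end

theory Submission
  imports Defs
begin

lemma step_simp: "step_tm1 M (T, p) = (T(p := fst (tm_delta M (T p))),
   if snd (tm_delta M (T p)) = MoveL then p - 1 else p + 1)"
  by (simp add: step_tm1_def split: prod.splits)

definition tsym :: "config \<Rightarrow> nat" where "tsym c = fst c (snd c)"

definition diverges :: "tm1 \<Rightarrow> config \<Rightarrow> bool" where
  "diverges M c \<longleftrightarrow> (\<forall>j. tsym ((step_tm1 M ^^ j) c) \<notin> tm_halt M)"

lemma halts_iff: "halts_tm1 M x \<longleftrightarrow> (\<exists>n. tsym ((step_tm1 M ^^ n) (init_config M x)) \<in> tm_halt M)"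
  unfolding halts_tm1_def tsym_def by (simp add: case_prod_beta)

lemma funpow_add_app: "(f ^^ (a + b)) c = (f ^^ a) ((f ^^ b) c)"
  by (simp add: funpow_add)

lemma diverge_right:
  assumes "tm_blank M \<notin> tm_halt M" "snd (tm_delta M (tm_blank M)) = MoveR"
    "\<forall>i\<ge>p. T i = tm_blank M"
  shows "diverges M (T, p)"
proof -
  have "\<forall>i\<ge>p + int j. fst ((step_tm1 M ^^ j) (T,p)) i = tm_blank M \<and> snd ((step_tm1 M ^^ j) (T,p)) = p + int j" for j
  proof (induction j)
    case 0 then show ?case using assms by simp
  next
    case (Suc j)
    obtain T' p' where e: "(step_tm1 M ^^ j) (T,p) = (T',p')" by fastforce
    with Suc have h: "\<forall>i\<ge>p + int j. T' i = tm_blank M" "p' = p + int j" by auto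
    then show ?case using assms(2) by (auto simp: e step_simp)
  qed
  then show ?thesis unfolding diverges_def tsym_def using assms(1)
    by (metis order_refl)
qed

lemma diverge_left:
  assumes "tm_blank M \<notin> tm_halt M" "snd (tm_delta M (tm_blank M)) = MoveL"
    "\<forall>i\<le>p. T i = tm_blank M"
  shows "diverges M (T, p)"
proof -
  have "\<forall>i\<le>p - int j. fst ((step_tm1 M ^^ j) (T,p)) i = tm_blank M \<and> snd ((step_tm1 M ^^ j) (T,p)) = p - int j" for j
  proof (induction j)
    case 0 then show ?case using assms by simp
  next
    case (Suc j)
    obtain T' p' where e: "(step_tm1 M ^^ j) (T,p) = (T',p')" by fastforce
    with Suc have h: "\<forall>i\<le>p - int j. T' i = tm_blank M" "p' = p - int j" by auto
    then show ?case using assms(2) by (auto simp: e step_simp)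
  qed
  then show ?thesis unfolding diverges_def tsym_def using assms(1)
    by (metis order_refl)
qed

lemma step_pos: "snd (step_tm1 M c) = snd c - 1 \<or> snd (step_tm1 M c) = snd c + 1"
  by (cases c) (simp add: step_simp)

lemma step_other: "i \<noteq> snd c \<Longrightarrow> fst (step_tm1 M c) i = fst c i"
  by (cases c) (simp add: step_simp)

lemma diverges_later:
  assumes "diverges M ((step_tm1 M ^^ k) c)" "k \<le> n"
  shows "tsym ((step_tm1 M ^^ n) c) \<notin> tm_halt M"
proof -
  have "(step_tm1 M ^^ n) c = (step_tm1 M ^^ (n - k)) ((step_tm1 M ^^ k) c)"
    using assms(2) by (metis funpow_add_app le_add_diff_inverse2)
  then show ?thesis using assms(1) unfolding diverges_def by metis
qed

lemma unvisited_right: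
  assumes "\<forall>k<j. snd ((step_tm1 M ^^ k) c) \<le> q" "i > q"
  shows "fst ((step_tm1 M ^^ j) c) i = fst c i"
  using assms(1)
proof (induction j)
  case 0 then show ?case by simp
next
  case (Suc j)
  then have "snd ((step_tm1 M ^^ j) c) \<le> q" by simp
  then have "fst (step_tm1 M ((step_tm1 M ^^ j) c)) i = fst ((step_tm1 M ^^ j) c) i"
    using assms(2) by (intro step_other) simp
  then show ?case using Suc by simp
qed

lemma unvisited_left:
  assumes "\<forall>k<j. snd ((step_tm1 M ^^ k) c) \<ge> q" "i < q"
  shows "fst ((step_tm1 M ^^ j) c) i = fst c i"
  using assms(1)
proof (induction j)
  case 0 then show ?case by simp
next
  case (Suc j)
  then have "snd ((step_tm1 M ^^ j) c) \<ge> q" by simp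
  then have "fst (step_tm1 M ((step_tm1 M ^^ j) c)) i = fst ((step_tm1 M ^^ j) c) i"
    using assms(2) by (intro step_other) simp
  then show ?case using Suc by simp
qed

lemma right_confined:
  assumes "tm_blank M \<notin> tm_halt M" "snd (tm_delta M (tm_blank M)) = MoveR"
    "\<forall>i>q. fst c i = tm_blank M" "snd c \<le> q"
    "tsym ((step_tm1 M ^^ n) c) \<in> tm_halt M"
  shows "\<forall>j\<le>n. snd ((step_tm1 M ^^ j) c) \<le> q"
proof -
  have "(\<forall>k\<le>j. snd ((step_tm1 M ^^ k) c) \<le> q) \<or> (\<exists>k\<le>j. diverges M ((step_tm1 M ^^ k) c))" for j
  proof (induction j)
    case 0 then show ?case using assms(4) by simp
  next
    case (Suc j)
    show ?case
    proof (cases "\<forall>k\<le>j. snd ((step_tm1 M ^^ k) c) \<le> q")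
      case False
      with Suc obtain k where "k \<le> j" "diverges M ((step_tm1 M ^^ k) c)" by blast
      then show ?thesis by (intro disjI2) (auto intro: le_SucI)
    next
      case True
      show ?thesis
      proof (cases "snd ((step_tm1 M ^^ Suc j) c) \<le> q")
        case True
        with \<open>\<forall>k\<le>j. _\<close> show ?thesis by (metis le_Suc_eq)
      next
        case False
        have "snd ((step_tm1 M ^^ j) c) \<le> q" using True by simp
        moreover have "snd ((step_tm1 M ^^ Suc j) c) = snd ((step_tm1 M ^^ j) c) - 1 \<or>
              snd ((step_tm1 M ^^ Suc j) c) = snd ((step_tm1 M ^^ j) c) + 1"
          using step_pos by simp
        ultimately have pq: "snd ((step_tm1 M ^^ Suc j) c) = q + 1" using False by auto
        have "\<forall>i\<ge>q+1. fst ((step_tm1 M ^^ Suc j) c) i = tm_blank M"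
        proof (intro allI impI)
          fix i :: int assume "i \<ge> q + 1"
          then have "fst ((step_tm1 M ^^ Suc j) c) i = fst c i"
            using True by (intro unvisited_right[where q=q]) auto
          then show "fst ((step_tm1 M ^^ Suc j) c) i = tm_blank M" using assms(3) \<open>i \<ge> q+1\<close> by simp
        qed
        then have "diverges M ((step_tm1 M ^^ Suc j) c)"
          using diverge_right[OF assms(1,2)] pq by (metis prod.collapse)
        then show ?thesis by blast
      qed
    qed
  qed
  from this[of n] show ?thesis using diverges_later assms(5) by blast
qed

lemma left_confined:
  assumes "tm_blank M \<notin> tm_halt M" "snd (tm_delta M (tm_blank M)) = MoveL"
    "\<forall>i<q. fst c i = tm_blank M" "snd c \<ge> q"
    "tsym ((step_tm1 M ^^ n) c) \<in> tm_halt M"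
  shows "\<forall>j\<le>n. snd ((step_tm1 M ^^ j) c) \<ge> q"
proof -
  have "(\<forall>k\<le>j. snd ((step_tm1 M ^^ k) c) \<ge> q) \<or> (\<exists>k\<le>j. diverges M ((step_tm1 M ^^ k) c))" for j
  proof (induction j)
    case 0 then show ?case using assms(4) by simp
  next
    case (Suc j)
    show ?case
    proof (cases "\<forall>k\<le>j. snd ((step_tm1 M ^^ k) c) \<ge> q")
      case False
      with Suc obtain k where "k \<le> j" "diverges M ((step_tm1 M ^^ k) c)" by blast
      then show ?thesis by (intro disjI2) (auto intro: le_SucI)
    next
      case True
      show ?thesis
      proof (cases "snd ((step_tm1 M ^^ Suc j) c) \<ge> q")
        case True
        with \<open>\<forall>k\<le>j. _\<close> show ?thesis by (metis le_Suc_eq)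
      next
        case False
        have "snd ((step_tm1 M ^^ j) c) \<ge> q" using True by simp
        moreover have "snd ((step_tm1 M ^^ Suc j) c) = snd ((step_tm1 M ^^ j) c) - 1 \<or>
              snd ((step_tm1 M ^^ Suc j) c) = snd ((step_tm1 M ^^ j) c) + 1"
          using step_pos by simp
        ultimately have pq: "snd ((step_tm1 M ^^ Suc j) c) = q - 1" using False by auto
        have "\<forall>i\<le>q-1. fst ((step_tm1 M ^^ Suc j) c) i = tm_blank M"
        proof (intro allI impI)
          fix i :: int assume "i \<le> q - 1"
          then have "fst ((step_tm1 M ^^ Suc j) c) i = fst c i"
            using True by (intro unvisited_left[where q=q]) auto
          then show "fst ((step_tm1 M ^^ Suc j) c) i = tm_blank M" using assms(3) \<open>i \<le> q - 1\<close> by simp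
        qed
        then have "diverges M ((step_tm1 M ^^ Suc j) c)"
          using diverge_left[OF assms(1,2)] pq by (metis prod.collapse)
        then show ?thesis by blast
      qed
    qed
  qed
  from this[of n] show ?thesis using diverges_later assms(5) by blast
qed

lemma agree_run:
  assumes "\<forall>j<n. snd ((step_tm1 M ^^ j) c) \<in> S" "snd c = snd e" "\<forall>i\<in>S. fst c i = fst e i"
  shows "snd ((step_tm1 M ^^ n) c) = snd ((step_tm1 M ^^ n) e) \<and>
         (\<forall>i\<in>S. fst ((step_tm1 M ^^ n) c) i = fst ((step_tm1 M ^^ n) e) i)"
  using assms(1)
proof (induction n)
  case 0 then show ?case using assms(2,3) by simp
next
  case (Suc n)
  obtain T p where c: "(step_tm1 M ^^ n) c = (T, p)" by fastforce
  obtain T' p' where e: "(step_tm1 M ^^ n) e = (T', p')" by fastforce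
  from Suc c e have h: "p = p'" "\<forall>i\<in>S. T i = T' i" "p \<in> S" by auto
  then have "T p = T' p" by simp
  then show ?case using h by (simp add: c e step_simp)
qed

definition shft :: "config \<Rightarrow> config" where
  "shft c = ((\<lambda>i. fst c (i - 1)), snd c + 1)"

lemma step_shft: "step_tm1 M (shft c) = shft (step_tm1 M c)"
  by (cases c) (auto simp: shft_def step_simp fun_eq_iff)

lemma funpow_shft: "(step_tm1 M ^^ n) (shft c) = shft ((step_tm1 M ^^ n) c)"
  by (induction n) (auto simp: step_shft)

lemma sym_shft: "tsym (shft c) = tsym c"
  by (simp add: tsym_def shft_def)

lemma not_single:
  assumes wf: "wf_tm1 M" and L: "lang_tm1 M = {[1]}"
  shows False
proof -
  let ?B = "tm_blank M"
  let ?H = "tm_halt M"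
  let ?c = "init_config M [1]"
  let ?e = "init_config M [1,1]"
  have "[1] \<in> lang_tm1 M" using L by simp
  then have s1: "1 \<in> tm_sigma M" and h1: "halts_tm1 M [1]" unfolding lang_tm1_def by auto
  have n0: "\<not> halts_tm1 M []"
  proof
    assume "halts_tm1 M []"
    then have "[] \<in> lang_tm1 M" unfolding lang_tm1_def by auto
    then show False using L by simp
  qed
  have n2: "\<not> halts_tm1 M [1,1]"
  proof
    assume "halts_tm1 M [1,1]"
    then have "[1,1] \<in> lang_tm1 M" using s1 unfolding lang_tm1_def by auto
    then show False using L by simp
  qed
  have BH: "?B \<notin> ?H"
  proof
    assume "?B \<in> ?H"
    then have "tsym ((step_tm1 M ^^ 0) (init_config M [])) \<in> ?H"
      by (simp add: tsym_def init_config_def)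
    then show False using n0 halts_iff by blast
  qed
  have oneH: "1 \<notin> ?H"
  proof
    assume "1 \<in> ?H"
    then have "tsym ((step_tm1 M ^^ 0) ?e) \<in> ?H"
      by (simp add: tsym_def init_config_def)
    then show False using n2 halts_iff by blast
  qed
  obtain n where hn: "tsym ((step_tm1 M ^^ n) ?c) \<in> ?H" using h1 halts_iff by blast
  have "n \<noteq> 0"
  proof
    assume "n = 0"
    then show False using hn oneH by (simp add: tsym_def init_config_def)
  qed
  then have n1: "1 \<le> n" by simp
  have c0R: "\<forall>i>0. fst ?c i = ?B" by (simp add: init_config_def)
  have c0L: "\<forall>i<0. fst ?c i = ?B" by (simp add: init_config_def)
  have sc: "snd ?c = 0" by (simp add: init_config_def)
  have c1pos: "snd ((step_tm1 M ^^ 1) ?c) = (if snd (tm_delta M 1) = MoveL then -1 else 1)"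
    by (simp add: init_config_def step_simp)
  show False
  proof (cases "snd (tm_delta M ?B)")
    case MoveR
    note dB = this
    have conf: "\<forall>j\<le>n. snd ((step_tm1 M ^^ j) ?c) \<le> 0"
      using right_confined[OF BH dB c0R _ hn] sc by simp
    show False
    proof (cases "snd (tm_delta M 1)")
      case MoveR
      then show False using conf n1 c1pos by fastforce
    next
      case MoveL
      have ag: "snd ((step_tm1 M ^^ n) ?c) = snd ((step_tm1 M ^^ n) ?e) \<and>
         (\<forall>i\<in>{i. i \<le> 0}. fst ((step_tm1 M ^^ n) ?c) i = fst ((step_tm1 M ^^ n) ?e) i)"
        by (rule agree_run) (use conf in \<open>auto simp: init_config_def\<close>)
      have "tsym ((step_tm1 M ^^ n) ?e) = tsym ((step_tm1 M ^^ n) ?c)"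
        using ag conf unfolding tsym_def by (metis mem_Collect_eq order_refl)
      then show False using hn n2 halts_iff by metis
    qed
  next
    case MoveL
    note dB = this
    have conf: "\<forall>j\<le>n. snd ((step_tm1 M ^^ j) ?c) \<ge> 0"
      using left_confined[OF BH dB c0L _ hn] sc by simp
    show False
    proof (cases "snd (tm_delta M 1)")
      case MoveL
      then show False using conf n1 c1pos by fastforce
    next
      case MoveR
      let ?e1 = "step_tm1 M ?e"
      have ag: "snd ((step_tm1 M ^^ n) (shft ?c)) = snd ((step_tm1 M ^^ n) ?e1) \<and>
         (\<forall>i\<in>{i. i \<ge> 1}. fst ((step_tm1 M ^^ n) (shft ?c)) i = fst ((step_tm1 M ^^ n) ?e1) i)"
      proof (rule agree_run)
        show "\<forall>j<n. snd ((step_tm1 M ^^ j) (shft ?c)) \<in> {i. i \<ge> 1}"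
        proof (intro allI impI)
          fix j assume "j < n"
          then have "snd ((step_tm1 M ^^ j) ?c) \<ge> 0" using conf by simp
          then show "snd ((step_tm1 M ^^ j) (shft ?c)) \<in> {i. i \<ge> 1}"
            by (simp only: funpow_shft) (simp add: shft_def)
        qed
        show "snd (shft ?c) = snd ?e1" using MoveR by (simp add: shft_def init_config_def step_simp)
        show "\<forall>i\<in>{i. i \<ge> 1}. fst (shft ?c) i = fst ?e1 i"
          by (auto simp: shft_def init_config_def step_simp)
      qed
      have "tsym ((step_tm1 M ^^ n) ?e1) = tsym ((step_tm1 M ^^ n) (shft ?c))"
      proof -
        have "snd ((step_tm1 M ^^ n) ?c) \<ge> 0" using conf by simp
        then have p1: "snd ((step_tm1 M ^^ n) (shft ?c)) \<ge> 1"
          by (simp only: funpow_shft) (simp add: shft_def)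
        then show ?thesis using ag unfolding tsym_def by simp
      qed
      also have "\<dots> = tsym ((step_tm1 M ^^ n) ?c)" by (simp add: funpow_shft sym_shft)
      finally have "tsym ((step_tm1 M ^^ n) ?e1) \<in> ?H" using hn by simp
      moreover have "(step_tm1 M ^^ Suc n) ?e = (step_tm1 M ^^ n) ?e1"
        by (simp only: funpow_Suc_right comp_apply)
      ultimately have "tsym ((step_tm1 M ^^ Suc n) ?e) \<in> ?H" by simp
      then show False using n2 halts_iff by metis
    qed
  qed
qed

lemma part1_reg: "regular {[1]}"
proof -
  define A where "A = \<lparr>dfa_states = {0,1,2::nat}, dfa_alpha = {1}, dfa_start = 0, dfa_final = {1},
     dfa_trans = (\<lambda>q a. if q = 0 then 1 else 2)\<rparr>"
  have wf: "wf_dfa A" by (simp add: A_def wf_dfa_def)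
  have f2: "foldl (dfa_trans A) 2 w = 2" for w
    by (induction w) (simp_all add: A_def)
  have "lang_dfa A = {[1]}"
  proof (intro set_eqI iffI)
    fix w :: "nat list" assume "w \<in> lang_dfa A"
    then have w1: "w \<in> lists {1}" and fin: "foldl (dfa_trans A) 0 w = 1"
      by (auto simp: lang_dfa_def A_def)
    show "w \<in> {[1]}"
    proof (cases w)
      case Nil then show ?thesis using fin by (simp add: A_def)
    next
      case (Cons a w')
      then have a: "a = 1" using w1 by auto
      show ?thesis
      proof (cases w')
        case Nil then show ?thesis using Cons a by simp
      next
        case (Cons b w'')
        have "foldl (dfa_trans A) 0 w = foldl (dfa_trans A) 2 w''"
          using \<open>w = a # w'\<close> Cons by (simp add: A_def)
        then show ?thesis using fin f2 by simp
      qed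
    qed
  next
    fix w :: "nat list" assume "w \<in> {[1]}"
    then show "w \<in> lang_dfa A" by (simp add: lang_dfa_def A_def)
  qed
  then show ?thesis using wf unfolding regular_def by blast
qed

lemma part1: "regular {[1]} \<and> {[1]} \<notin> TM_1state"
  using part1_reg not_single unfolding TM_1state_def by blast

definition nh :: "tm1 \<Rightarrow> config \<Rightarrow> config \<Rightarrow> bool" where
  "nh M c c' \<longleftrightarrow> tsym c \<notin> tm_halt M \<and> c' = step_tm1 M c"

abbreviation reach :: "tm1 \<Rightarrow> config \<Rightarrow> config \<Rightarrow> bool" where
  "reach M \<equiv> (nh M)\<^sup>*\<^sup>*"

lemma reach_funpow:
  assumes "reach M c c'"
  shows "\<exists>k. (step_tm1 M ^^ k) c = c' \<and> (\<forall>j<k. tsym ((step_tm1 M ^^ j) c) \<notin> tm_halt M)"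
  using assms
proof (induction rule: rtranclp_induct)
  case base
  then show ?case by (intro exI[of _ 0]) simp
next
  case (step y z)
  then obtain k where k: "(step_tm1 M ^^ k) c = y" "\<forall>j<k. tsym ((step_tm1 M ^^ j) c) \<notin> tm_halt M" by blast
  have "(step_tm1 M ^^ Suc k) c = z" using k step(2) by (simp add: nh_def)
  moreover have "\<forall>j<Suc k. tsym ((step_tm1 M ^^ j) c) \<notin> tm_halt M"
    using k step(2) by (auto simp: nh_def less_Suc_eq)
  ultimately show ?case by blast
qed

lemma halts_of_reach:
  assumes "reach M (init_config M x) c" "tsym c \<in> tm_halt M"
  shows "halts_tm1 M x"
  using reach_funpow[OF assms(1)] assms(2) halts_iff by metis

lemma diverges_reach:
  assumes "reach M c c'" "diverges M c'"
  shows "diverges M c"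
proof -
  obtain k where k: "(step_tm1 M ^^ k) c = c'" "\<forall>j<k. tsym ((step_tm1 M ^^ j) c) \<notin> tm_halt M"
    using reach_funpow[OF assms(1)] by blast
  show ?thesis unfolding diverges_def
  proof
    fix j
    show "tsym ((step_tm1 M ^^ j) c) \<notin> tm_halt M"
    proof (cases "j < k")
      case True then show ?thesis using k by simp
    next
      case False
      then show ?thesis using diverges_later[of M k c j] k assms(2) by simp
    qed
  qed
qed

lemma nonhalt_of_reach:
  assumes "reach M (init_config M x) c" "diverges M c"
  shows "\<not> halts_tm1 M x"
  using diverges_reach[OF assms] halts_iff unfolding diverges_def by metis

lemma reach_step:
  assumes "T p = s" "s \<notin> tm_halt M" "tm_delta M s = (s', d)"
  shows "reach M (T, p) (T(p := s'), if d = MoveL then p - 1 else p + 1)"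
  using assms by (intro r_into_rtranclp) (simp add: nh_def tsym_def step_simp)

lemma sweepR:
  assumes "\<forall>j<l. T (p + int j) = s" "s \<notin> tm_halt M" "tm_delta M s = (s', MoveR)"
  shows "reach M (T, p) (\<lambda>i. if p \<le> i \<and> i < p + int l then s' else T i, p + int l)"
  using assms(1)
proof (induction l arbitrary: T p)
  case 0
  have "(\<lambda>i. if p \<le> i \<and> i < p then s' else T i) = T" by auto
  then show ?case by simp
next
  case (Suc l)
  have 1: "reach M (T, p) (T(p := s'), p + 1)"
  proof -
    have "T p = s" using Suc.prems[rule_format, of 0] by simp
    from reach_step[of T p s M, OF this assms(2,3)] show ?thesis by simp
  qed
  have "\<forall>j<l. (T(p := s')) (p + 1 + int j) = s" using Suc.prems by (auto simp: add.assoc)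
  from Suc.IH[OF this]
  have 2: "reach M (T(p := s'), p + 1)
     (\<lambda>i. if p + 1 \<le> i \<and> i < p + 1 + int l then s' else (T(p := s')) i, p + 1 + int l)" .
  have e: "(\<lambda>i. if p + 1 \<le> i \<and> i < p + 1 + int l then s' else (T(p := s')) i) =
           (\<lambda>i. if p \<le> i \<and> i < p + int (Suc l) then s' else T i)"
    by (auto simp: fun_eq_iff)
  show ?case using rtranclp_trans[OF 1 2] e by (simp add: add.assoc)
qed

lemma sweepL:
  assumes "\<forall>j<l. T (p - int j) = s" "s \<notin> tm_halt M" "tm_delta M s = (s', MoveL)"
  shows "reach M (T, p) (\<lambda>i. if p - int l < i \<and> i \<le> p then s' else T i, p - int l)"
  using assms(1)
proof (induction l arbitrary: T p)
  case 0
  have "(\<lambda>i. if p < i \<and> i \<le> p then s' else T i) = T" by auto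
  then show ?case by simp
next
  case (Suc l)
  have 1: "reach M (T, p) (T(p := s'), p - 1)"
  proof -
    have "T p = s" using Suc.prems[rule_format, of 0] by simp
    from reach_step[of T p s M, OF this assms(2,3)] show ?thesis by simp
  qed
  have "\<forall>j<l. (T(p := s')) (p - 1 - int j) = s" using Suc.prems by (auto simp: algebra_simps)
  from Suc.IH[OF this]
  have 2: "reach M (T(p := s'), p - 1)
     (\<lambda>i. if p - 1 - int l < i \<and> i \<le> p - 1 then s' else (T(p := s')) i, p - 1 - int l)" .
  have e: "(\<lambda>i. if p - 1 - int l < i \<and> i \<le> p - 1 then s' else (T(p := s')) i) =
           (\<lambda>i. if p - int (Suc l) < i \<and> i \<le> p then s' else T i)"
    by (auto simp: fun_eq_iff)
  show ?case using rtranclp_trans[OF 1 2] e by (simp add: algebra_simps)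
qed

definition dx :: "nat \<Rightarrow> nat \<times> move" where
  "dx s = (if s = 0 then (8, MoveL) else if s = 1 then (3, MoveR) else if s = 2 then (6, MoveR)
     else if s = 3 then (4, MoveR) else if s = 4 then (5, MoveL) else if s = 5 then (4, MoveR)
     else if s = 6 then (7, MoveL) else if s = 7 then (2, MoveL) else (8, MoveR))"

definition Mx :: tm1 where
  "Mx = \<lparr>tm_sigma = {1,2}, tm_gamma = {0..8}, tm_blank = 0, tm_halt = {8}, tm_delta = dx\<rparr>"

lemma Mx_simps[simp]: "tm_sigma Mx = {1,2}" "tm_blank Mx = 0" "tm_halt Mx = {8}" "tm_delta Mx = dx"
  by (simp_all add: Mx_def)

lemma dx_vals: "dx 0 = (8, MoveL)" "dx 1 = (3, MoveR)" "dx 2 = (6, MoveR)" "dx 3 = (4, MoveR)"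
  "dx 4 = (5, MoveL)" "dx 5 = (4, MoveR)" "dx 6 = (7, MoveL)" "dx 7 = (2, MoveL)"
  by (simp_all add: dx_def)

lemma nh_vals: "(0::nat) \<notin> tm_halt Mx" "(1::nat) \<notin> tm_halt Mx" "(2::nat) \<notin> tm_halt Mx"
  "(3::nat) \<notin> tm_halt Mx" "(4::nat) \<notin> tm_halt Mx" "(5::nat) \<notin> tm_halt Mx"
  "(6::nat) \<notin> tm_halt Mx" "(7::nat) \<notin> tm_halt Mx"
  by simp_all

lemma wf_Mx: "wf_tm1 Mx"
  by (auto simp: wf_tm1_def Mx_def dx_def)

definition tp :: "nat \<Rightarrow> nat \<Rightarrow> nat list \<Rightarrow> int \<Rightarrow> nat" where
  "tp m k cs i = (if i < 0 then 0 else if i < int m - int k then 3 else if i < int m then 4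
     else if i < int m + int (length cs) then cs ! nat (i - int m)
     else if i = int m + int (length cs) then 8 else 0)"

lemma fuel_ok:
  assumes "k < m"
  shows "reach Mx (tp m k cs, int m - 1) (tp m (Suc k) cs, int m)"
proof -
  have "\<forall>j<k. tp m k cs (int m - 1 - int j) = 4" using assms by (auto simp: tp_def)
  from sweepL[OF this, of Mx 5]
  have 1: "reach Mx (tp m k cs, int m - 1)
     (\<lambda>i. if int m - 1 - int k < i \<and> i \<le> int m - 1 then 5 else tp m k cs i, int m - 1 - int k)"
    by (simp add: dx_def)
  let ?T1 = "\<lambda>i. if int m - 1 - int k < i \<and> i \<le> int m - 1 then 5 else tp m k cs i"
  have "?T1 (int m - 1 - int k) = 3" using assms by (auto simp: tp_def)
  from reach_step[of ?T1 "int m - 1 - int k" 3 Mx 4 MoveR, OF this]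
  have 2: "reach Mx (?T1, int m - 1 - int k) (?T1(int m - 1 - int k := 4), int m - int k)"
    by (simp add: dx_def)
  let ?T2 = "?T1(int m - 1 - int k := 4)"
  have "\<forall>j<k. ?T2 (int m - int k + int j) = 5" by auto
  note 3 = sweepR[OF this nh_vals(6) dx_vals(6)[folded Mx_simps(4)]]
  have e: "(\<lambda>i. if int m - int k \<le> i \<and> i < int m - int k + int k then 4 else ?T2 i) = tp m (Suc k) cs"
    using assms by (auto simp: fun_eq_iff tp_def)
  show ?thesis using rtranclp_trans[OF rtranclp_trans[OF 1 2] 3] e by simp
qed

lemma fuel_out:
  shows "diverges Mx (tp m m cs, int m - 1)"
proof -
  have "\<forall>j<m. tp m m cs (int m - 1 - int j) = 4" by (auto simp: tp_def)
  from sweepL[OF this, of Mx 5]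
  have 1: "reach Mx (tp m m cs, int m - 1)
     (\<lambda>i. if int m - 1 - int m < i \<and> i \<le> int m - 1 then 5 else tp m m cs i, int m - 1 - int m)"
    by (simp add: dx_def)
  have "diverges Mx (\<lambda>i. if int m - 1 - int m < i \<and> i \<le> int m - 1 then 5 else tp m m cs i, int m - 1 - int m)"
    by (rule diverge_left) (auto simp: dx_def tp_def)
  then show ?thesis using diverges_reach[OF 1] by simp
qed

lemma tp_upd:
  assumes "j < length cs"
  shows "(tp m k cs)(int m + int j := v) = tp m k (cs[j := v])"
  using assms by (auto simp: fun_eq_iff tp_def nth_list_update)

lemma tp_at:
  assumes "j < length cs"
  shows "tp m k cs (int m + int j) = cs ! j"
  using assms by (simp add: tp_def)

lemma counter_sweepL:
  assumes "i \<le> length cs" "\<forall>j<i. cs ! j = 6"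
  shows "reach Mx (tp m k cs, int m + int i - 1) (tp m k (replicate i 7 @ drop i cs), int m - 1)"
proof -
  have "\<forall>j<i. tp m k cs (int m + int i - 1 - int j) = 6"
  proof (intro allI impI)
    fix j assume "j < i"
    then have e: "int m + int i - 1 - int j = int m + int (i - 1 - j)" by simp
    have "tp m k cs (int m + int (i - 1 - j)) = cs ! (i - 1 - j)"
      using assms \<open>j < i\<close> by (intro tp_at) simp
    also have "\<dots> = 6" using assms \<open>j < i\<close> by simp
    finally have "tp m k cs (int m + int (i - 1 - j)) = 6" .
    then show "tp m k cs (int m + int i - 1 - int j) = 6" by (simp only: e)
  qed
  note 1 = sweepL[OF this nh_vals(7) dx_vals(7)[folded Mx_simps(4)]]
  have e: "(\<lambda>x. if int m + int i - 1 - int i < x \<and> x \<le> int m + int i - 1 then 7 else tp m k cs x)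
      = tp m k (replicate i 7 @ drop i cs)"
  proof
    fix x
    show "(if int m + int i - 1 - int i < x \<and> x \<le> int m + int i - 1 then 7 else tp m k cs x)
      = tp m k (replicate i 7 @ drop i cs) x"
    proof (cases "int m \<le> x \<and> x < int m + int i")
      case True
      define j where "j = nat (x - int m)"
      have "x = int m + int j" "j < i" using True by (auto simp: j_def)
      then show ?thesis using assms by (simp add: tp_at nth_append)
    next
      case False
      then show ?thesis using assms
        by (auto simp: tp_def nth_append min_def)
    qed
  qed
  show ?thesis using 1 e by simp
qed

lemma counter:
  assumes "k \<le> m"
  shows "(k + 2^i - 1 \<le> m \<longrightarrow> reach Mx (tp m k (replicate i 7 @ rest), int m)
            (tp m (k + 2^i - 1) (replicate i 6 @ rest), int m + int i)) \<and>
         (m < k + 2^i - 1 \<longrightarrow> diverges Mx (tp m k (replicate i 7 @ rest), int m))"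
  using assms
proof (induction i arbitrary: k rest)
  case 0
  then show ?case by simp
next
  case (Suc i)
  have eq7: "replicate (Suc i) (7::nat) @ rest = replicate i 7 @ 7 # rest"
    by (simp add: replicate_app_Cons_same)
  have eq6: "replicate (Suc i) (6::nat) @ rest = replicate i 6 @ 6 # rest"
    by (simp add: replicate_app_Cons_same)
  define k1 where "k1 = k + 2^i - 1"
  have pw: "k + 2 ^ Suc i - 1 = Suc k1 + 2^i - 1" unfolding k1_def
    by (simp add: algebra_simps)
  note IH1 = Suc.IH[of k "7 # rest", OF Suc.prems, folded k1_def]
  show ?case
  proof (cases "m < k1")
    case True
    then have "diverges Mx (tp m k (replicate i 7 @ 7 # rest), int m)" using IH1 by blast
    moreover have "m < k + 2 ^ Suc i - 1" using True pw by simp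
    ultimately show ?thesis unfolding eq7 by simp
  next
    case False
    then have R1: "reach Mx (tp m k (replicate i 7 @ 7 # rest), int m)
            (tp m k1 (replicate i 6 @ 7 # rest), int m + int i)" using IH1 by simp
    have at7: "tp m k1 (replicate i 6 @ 7 # rest) (int m + int i) = 7"
      by (subst tp_at) (simp_all add: nth_append)
    have R2: "reach Mx (tp m k1 (replicate i 6 @ 7 # rest), int m + int i)
            (tp m k1 (replicate i 6 @ 2 # rest), int m + int i - 1)"
    proof -
      note st = reach_step[of "tp m k1 (replicate i 6 @ 7 # rest)" "int m + int i" 7 Mx 2 MoveL, OF at7 nh_vals(8) dx_vals(8)[folded Mx_simps(4)]]
      have "(tp m k1 (replicate i 6 @ 7 # rest))(int m + int i := 2) = tp m k1 ((replicate i 6 @ 7 # rest)[i := 2])"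
        by (rule tp_upd) simp
      also have "(replicate i 6 @ 7 # rest)[i := 2] = replicate i 6 @ 2 # rest"
        by (simp add: list_update_append)
      finally have E: "(tp m k1 (replicate i 6 @ 7 # rest))(int m + int i := 2) = tp m k1 (replicate i 6 @ 2 # rest)" .
      show ?thesis using st[unfolded E] by simp
    qed
    have R3: "reach Mx (tp m k1 (replicate i 6 @ 2 # rest), int m + int i - 1)
            (tp m k1 (replicate i 7 @ 2 # rest), int m - 1)"
      using counter_sweepL[of i "replicate i 6 @ 2 # rest" m k1] by (simp add: nth_append)
    note R123 = rtranclp_trans[OF rtranclp_trans[OF R1 R2] R3]
    show ?thesis
    proof (cases "k1 = m")
      case True
      then have "diverges Mx (tp m k1 (replicate i 7 @ 2 # rest), int m - 1)" using fuel_out by simp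
      then have "diverges Mx (tp m k (replicate (Suc i) 7 @ rest), int m)"
        unfolding eq7 using diverges_reach[OF R123] by simp
      moreover have "m < k + 2 ^ Suc i - 1" using True pw by simp
      ultimately show ?thesis by simp
    next
      case False
      then have "k1 < m" using \<open>\<not> m < k1\<close> by simp
      note R4 = fuel_ok[OF this, of "replicate i 7 @ 2 # rest"]
      note R1234 = rtranclp_trans[OF R123 R4]
      note IH2 = Suc.IH[of "Suc k1" "2 # rest"]
      have "Suc k1 \<le> m" using \<open>k1 < m\<close> by simp
      note IH2 = IH2[OF this, folded pw]
      show ?thesis
      proof (cases "m < k + 2 ^ Suc i - 1")
        case True
        then have "diverges Mx (tp m (Suc k1) (replicate i 7 @ 2 # rest), int m)" using IH2 by blast
        then have "diverges Mx (tp m k (replicate (Suc i) 7 @ rest), int m)"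
          unfolding eq7 using diverges_reach[OF R1234] by simp
        then show ?thesis using True by simp
      next
        case False
        then have R5: "reach Mx (tp m (Suc k1) (replicate i 7 @ 2 # rest), int m)
            (tp m (k + 2 ^ Suc i - 1) (replicate i 6 @ 2 # rest), int m + int i)" using IH2 by simp
        have at2: "tp m (k + 2 ^ Suc i - 1) (replicate i 6 @ 2 # rest) (int m + int i) = 2"
          by (subst tp_at) (simp_all add: nth_append)
        have R6: "reach Mx (tp m (k + 2 ^ Suc i - 1) (replicate i 6 @ 2 # rest), int m + int i)
            (tp m (k + 2 ^ Suc i - 1) (replicate (Suc i) 6 @ rest), int m + int (Suc i))"
        proof -
          note st = reach_step[of "tp m (k + 2 ^ Suc i - 1) (replicate i 6 @ 2 # rest)" "int m + int i" 2 Mx 6 MoveR, OF at2 nh_vals(3) dx_vals(3)[folded Mx_simps(4)]]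
          have "(tp m (k + 2 ^ Suc i - 1) (replicate i 6 @ 2 # rest))(int m + int i := 6)
                = tp m (k + 2 ^ Suc i - 1) ((replicate i 6 @ 2 # rest)[i := 6])"
            by (rule tp_upd) simp
          also have "(replicate i 6 @ 2 # rest)[i := 6] = replicate (Suc i) 6 @ rest"
            by (simp add: list_update_append eq6 del: replicate_Suc)
          finally have E: "(tp m (k + 2 ^ Suc i - 1) (replicate i 6 @ 2 # rest))(int m + int i := 6)
                = tp m (k + 2 ^ Suc i - 1) (replicate (Suc i) 6 @ rest)" .
          show ?thesis using st[unfolded E] by (simp add: algebra_simps)
        qed
        show ?thesis unfolding eq7 using rtranclp_trans[OF rtranclp_trans[OF R1234 R5] R6] False by simp
      qed
    qed
  qed
qed

lemma init_phase:
  fixes m n :: nat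
  defines "x \<equiv> replicate m (1::nat) @ replicate n 2"
  shows "reach Mx (init_config Mx x) (tp m 0 (replicate n 7), int m - 1)"
proof -
  define I0 where "I0 = (\<lambda>i. if 0 \<le> i \<and> i < int (length x) then x ! nat i else 0)"
  have ic: "init_config Mx x = (I0, 0)" unfolding init_config_def I0_def Mx_simps(2) by simp
  have "\<forall>j<m. I0 (0 + int j) = 1" by (auto simp: I0_def x_def nth_append)
  note R1 = sweepR[OF this nh_vals(2) dx_vals(2)[folded Mx_simps(4)]]
  define T1 where "T1 = (\<lambda>i. if 0 \<le> i \<and> i < 0 + int m then 3 else I0 i)"
  have "\<forall>j<n. T1 (int m + int j) = 2" by (auto simp: T1_def I0_def x_def nth_append)
  note R2 = sweepR[OF this nh_vals(3) dx_vals(3)[folded Mx_simps(4)]]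
  define T2 where "T2 = (\<lambda>i. if int m \<le> i \<and> i < int m + int n then 6 else T1 i)"
  have "T2 (int m + int n) = 0" by (simp add: T2_def T1_def I0_def x_def)
  note R3 = reach_step[of T2 "int m + int n" 0 Mx 8 MoveL, OF this nh_vals(1) dx_vals(1)[folded Mx_simps(4)]]
  define T3 where "T3 = T2(int m + int n := 8)"
  have "\<forall>j<n. T3 (int m + int n - 1 - int j) = 6" by (auto simp: T3_def T2_def)
  note R4 = sweepL[OF this nh_vals(7) dx_vals(7)[folded Mx_simps(4)]]
  have e: "(\<lambda>i. if int m + int n - 1 - int n < i \<and> i \<le> int m + int n - 1 then 7 else T3 i)
      = tp m 0 (replicate n 7)"
    by (auto simp: fun_eq_iff T3_def T2_def T1_def I0_def x_def tp_def nth_append)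
  have R1': "reach Mx (I0, 0) (T1, int m)" using R1 by (simp add: T1_def)
  have R2': "reach Mx (T1, int m) (T2, int m + int n)" using R2 by (simp add: T2_def)
  have R3': "reach Mx (T2, int m + int n) (T3, int m + int n - 1)" using R3 by (simp add: T3_def)
  have R4': "reach Mx (T3, int m + int n - 1) (tp m 0 (replicate n 7), int m - 1)" using R4 e by simp
  show ?thesis unfolding ic using rtranclp_trans[OF rtranclp_trans[OF rtranclp_trans[OF R1' R2'] R3'] R4'] .
qed

lemma tp_end: "tp m k cs (int m + int (length cs)) = 8"
  by (simp add: tp_def)

lemma char:
  "halts_tm1 Mx (replicate m (1::nat) @ replicate n 2) \<longleftrightarrow> 2 ^ n \<le> m"
proof -
  note I = init_phase[of m n]
  show ?thesis
  proof (cases "2 ^ n \<le> m")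
    case True
    have "(1::nat) \<le> 2 ^ n" by simp
    then have m0: "0 < m" using True by linarith
    have F: "reach Mx (tp m 0 (replicate n 7), int m - 1) (tp m 1 (replicate n 7), int m)"
      using fuel_ok[OF m0, of "replicate n 7"] by simp
    have "1 \<le> m" using m0 by simp
    note C = counter[OF this, of n "[]"]
    have "1 + 2 ^ n - 1 \<le> m" using True by simp
    then have R: "reach Mx (tp m 1 (replicate n 7), int m) (tp m (2 ^ n) (replicate n 6), int m + int n)"
      using C by simp
    have "tsym (tp m (2 ^ n) (replicate n 6), int m + int n) \<in> tm_halt Mx"
      using tp_end[of m "2^n" "replicate n 6"] by (simp add: tsym_def)
    then show ?thesis using halts_of_reach[OF rtranclp_trans[OF rtranclp_trans[OF I F] R]] True by simp
  next
    case False
    show ?thesis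
    proof (cases "m = 0")
      case True
      have "diverges Mx (tp m 0 (replicate n 7), int m - 1)" using fuel_out[of 0] True by simp
      then show ?thesis using nonhalt_of_reach[OF I] False by simp
    next
      case m0: False
      then have mp: "0 < m" by simp
      have F: "reach Mx (tp m 0 (replicate n 7), int m - 1) (tp m 1 (replicate n 7), int m)"
        using fuel_ok[OF mp, of "replicate n 7"] by simp
      have "1 \<le> m" using m0 by simp
      note C = counter[OF this, of n "[]"]
      have "m < 1 + 2 ^ n - 1" using False by simp
      then have D: "diverges Mx (tp m 1 (replicate n 7), int m)" using C by simp
      show ?thesis using nonhalt_of_reach[OF rtranclp_trans[OF I F] D] False by simp
    qed
  qed
qed

datatype tr = Lf nat | Nd nat "tr list"

fun troot :: "tr \<Rightarrow> nat + nat" where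
  "troot (Lf a) = Inr a" | "troot (Nd A ts) = Inl A"

fun yld :: "tr \<Rightarrow> nat list" where
  "yld (Lf a) = [a]" | "yld (Nd A ts) = concat (map yld ts)"

fun tvalid :: "(nat \<times> (nat + nat) list) set \<Rightarrow> tr \<Rightarrow> bool" where
  "tvalid P (Lf a) = True"
| "tvalid P (Nd A ts) = ((A, map troot ts) \<in> P \<and> (\<forall>t\<in>set ts. tvalid P t))"

fun hgt :: "tr \<Rightarrow> nat" where
  "hgt (Lf a) = 0" | "hgt (Nd A ts) = Suc (Max (insert 0 (set (map hgt ts))))"

fun sz :: "tr \<Rightarrow> nat" where
  "sz (Lf a) = 1" | "sz (Nd A ts) = Suc (sum_list (map sz ts))"

lemma cfg_stepI: "(A, \<alpha>) \<in> P \<Longrightarrow> (u @ [Inl A] @ v, u @ \<alpha> @ v) \<in> cfg_step P"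
  unfolding cfg_step_def by blast

lemma step_cong1:
  assumes "(\<alpha>, \<beta>) \<in> cfg_step P"
  shows "(u @ \<alpha> @ v, u @ \<beta> @ v) \<in> cfg_step P"
proof -
  from assms obtain u' v' A \<gamma> where e: "\<alpha> = u' @ [Inl A] @ v'" "\<beta> = u' @ \<gamma> @ v'" "(A, \<gamma>) \<in> P"
    unfolding cfg_step_def by blast
  have "((u @ u') @ [Inl A] @ (v' @ v), (u @ u') @ \<gamma> @ (v' @ v)) \<in> cfg_step P"
    using e(3) unfolding cfg_step_def by blast
  then show ?thesis using e by simp
qed

lemma step_cong:
  assumes "(\<alpha>, \<beta>) \<in> (cfg_step P)\<^sup>*"
  shows "(u @ \<alpha> @ v, u @ \<beta> @ v) \<in> (cfg_step P)\<^sup>*"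
  using assms
proof (induction rule: rtrancl_induct)
  case base then show ?case by simp
next
  case (step y z)
  then show ?case using step_cong1[OF step(2)] by (meson rtrancl.rtrancl_into_rtrancl)
qed

lemma step_app:
  assumes "(\<alpha>1, \<beta>1) \<in> (cfg_step P)\<^sup>*" "(\<alpha>2, \<beta>2) \<in> (cfg_step P)\<^sup>*"
  shows "(\<alpha>1 @ \<alpha>2, \<beta>1 @ \<beta>2) \<in> (cfg_step P)\<^sup>*"
proof -
  have "([] @ \<alpha>1 @ \<alpha>2, [] @ \<beta>1 @ \<alpha>2) \<in> (cfg_step P)\<^sup>*" by (rule step_cong[OF assms(1)])
  moreover have "(\<beta>1 @ \<alpha>2 @ [], \<beta>1 @ \<beta>2 @ []) \<in> (cfg_step P)\<^sup>*" by (rule step_cong[OF assms(2)])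
  ultimately show ?thesis by simp
qed

lemma tree_der:
  "tvalid P t \<Longrightarrow> ([troot t], map Inr (yld t)) \<in> (cfg_step P)\<^sup>*"
proof (induction t)
  case (Lf a) then show ?case by simp
next
  case (Nd A ts)
  have "\<forall>t\<in>set ts. tvalid P t" using Nd.prems by simp
  with Nd.IH have all: "\<forall>t\<in>set ts. ([troot t], map Inr (yld t)) \<in> (cfg_step P)\<^sup>*" by blast
  have L: "(map troot ts, map Inr (concat (map yld ts))) \<in> (cfg_step P)\<^sup>*"
    using all
  proof (induction ts)
    case Nil then show ?case by simp
  next
    case (Cons t ts)
    then have "([troot t] @ map troot ts, map Inr (yld t) @ map Inr (concat (map yld ts))) \<in> (cfg_step P)\<^sup>*"
      by (intro step_app) auto
    then show ?case by simp
  qed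
  have "(A, map troot ts) \<in> P" using Nd.prems by simp
  from cfg_stepI[OF this, of "[]" "[]"]
  have "([Inl A], map troot ts) \<in> cfg_step P" by simp
  from converse_rtrancl_into_rtrancl[OF this L] show ?case by simp
qed

lemma der_tree:
  assumes "(\<alpha>, \<gamma>) \<in> (cfg_step P)\<^sup>*" "\<gamma> = map Inr w"
  shows "\<exists>ts. map troot ts = \<alpha> \<and> (\<forall>t\<in>set ts. tvalid P t) \<and> concat (map yld ts) = w"
  using assms
proof (induction rule: converse_rtrancl_induct)
  case base
  have "concat (map yld (map Lf w)) = w" by (induction w) auto
  then show ?case using base by (intro exI[of _ "map Lf w"]) auto
next
  case (step y z)
  then obtain ts where ts: "map troot ts = z" "\<forall>t\<in>set ts. tvalid P t" "concat (map yld ts) = w" by blast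
  from step(1) obtain u v A \<beta> where e: "y = u @ [Inl A] @ v" "z = u @ \<beta> @ v" "(A, \<beta>) \<in> P"
    unfolding cfg_step_def by blast
  from ts(1) e(2) obtain ts1 ts23 where s1: "ts = ts1 @ ts23" "map troot ts1 = u" "map troot ts23 = \<beta> @ v"
    by (metis map_eq_append_conv)
  from s1(3) obtain ts2 ts3 where s2: "ts23 = ts2 @ ts3" "map troot ts2 = \<beta>" "map troot ts3 = v"
    by (metis map_eq_append_conv)
  let ?ts = "ts1 @ [Nd A ts2] @ ts3"
  have "map troot ?ts = y" using s1 s2 e by simp
  moreover have "\<forall>t\<in>set ?ts. tvalid P t" using ts(2) s1 s2 e(3) by auto
  moreover have "concat (map yld ?ts) = w" using ts(3) s1 s2 by simp
  ultimately show ?case by blast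
qed

lemma lang_cfg_iff:
  "w \<in> lang_cfg (P, S) \<longleftrightarrow> (\<exists>t. tvalid P t \<and> troot t = Inl S \<and> yld t = w)"
proof
  assume "w \<in> lang_cfg (P, S)"
  then have "([Inl S], map Inr w) \<in> (cfg_step P)\<^sup>*" by (simp add: lang_cfg_def)
  from der_tree[OF this refl] obtain ts where
    ts: "map troot ts = [Inl S]" "\<forall>t\<in>set ts. tvalid P t" "concat (map yld ts) = w" by (elim exE conjE) simp
  then obtain t where "ts = [t]" by (metis map_eq_Cons_D map_is_Nil_conv)
  then show "\<exists>t. tvalid P t \<and> troot t = Inl S \<and> yld t = w" using ts by auto
next
  assume "\<exists>t. tvalid P t \<and> troot t = Inl S \<and> yld t = w"
  then obtain t where "tvalid P t" "troot t = Inl S" "yld t = w" by blast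
  then show "w \<in> lang_cfg (P, S)" using tree_der[of P t] by (simp add: lang_cfg_def)
qed

datatype cx = Hole | Cx nat "tr list" cx "tr list"

fun fill :: "cx \<Rightarrow> tr \<Rightarrow> tr" where
  "fill Hole t = t" | "fill (Cx A l c r) t = Nd A (l @ [fill c t] @ r)"

fun lyc :: "cx \<Rightarrow> nat list" where
  "lyc Hole = []" | "lyc (Cx A l c r) = concat (map yld l) @ lyc c"

fun ryc :: "cx \<Rightarrow> nat list" where
  "ryc Hole = []" | "ryc (Cx A l c r) = ryc c @ concat (map yld r)"

fun croot :: "cx \<Rightarrow> nat + nat \<Rightarrow> nat + nat" where
  "croot Hole X = X" | "croot (Cx A l c r) X = Inl A"

fun cvalid :: "(nat \<times> (nat + nat) list) set \<Rightarrow> cx \<Rightarrow> nat + nat \<Rightarrow> bool" where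
  "cvalid P Hole X = True"
| "cvalid P (Cx A l c r) X = ((A, map troot l @ [croot c X] @ map troot r) \<in> P \<and>
     (\<forall>t\<in>set l. tvalid P t) \<and> (\<forall>t\<in>set r. tvalid P t) \<and> cvalid P c X)"

lemma yld_fill: "yld (fill c t) = lyc c @ yld t @ ryc c"
  by (induction c) auto

lemma root_fill: "troot (fill c t) = croot c (troot t)"
  by (cases c) auto

lemma valid_fill: "tvalid P (fill c t) \<longleftrightarrow> cvalid P c (troot t) \<and> tvalid P t"
  by (induction c) (auto simp: root_fill)

lemma sz_fill_mono: "sz a < sz b \<Longrightarrow> sz (fill c a) < sz (fill c b)"
  by (induction c) auto

lemma sz_fill: "c \<noteq> Hole \<Longrightarrow> sz t < sz (fill c t)"
proof (induction c)
  case Hole then show ?case by simp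
next
  case (Cx A l c r)
  show ?case
  proof (cases "c = Hole")
    case True then show ?thesis by simp
  next
    case False
    with Cx.IH have "sz t < sz (fill c t)" by simp
    then show ?thesis by simp
  qed
qed

lemma hgt_child: "t \<in> set ts \<Longrightarrow> hgt t < hgt (Nd A ts)"
  by (simp add: le_imp_less_Suc)

lemma hgt_fill: "hgt t \<le> hgt (fill c t)"
proof (induction c)
  case Hole then show ?case by simp
next
  case (Cx A l c r)
  have "hgt (fill c t) < hgt (fill (Cx A l c r) t)" by (simp add: le_imp_less_Suc)
  then show ?case using Cx.IH by simp
qed

lemma hgt_max_child:
  assumes "hgt (Nd A ts) = Suc h" "h > 0"
  shows "\<exists>l t r. ts = l @ t # r \<and> hgt t = h"
proof -
  have "h = Max (insert 0 (set (map hgt ts)))" using assms(1) by simp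
  moreover have "Max (insert 0 (set (map hgt ts))) \<in> insert 0 (set (map hgt ts))"
    by (rule Max_in) auto
  ultimately have "h \<in> set (map hgt ts)" using assms(2) by auto
  then obtain t where "t \<in> set ts" "hgt t = h" by auto
  then show ?thesis by (metis split_list)
qed

lemma descend:
  assumes "hgt t \<ge> Suc K"
  shows "\<exists>c s. t = fill c s \<and> hgt s = Suc K"
  using assms
proof (induction t)
  case (Lf a) then show ?case by simp
next
  case (Nd A ts)
  show ?case
  proof (cases "hgt (Nd A ts) = Suc K")
    case True then show ?thesis by (metis fill.simps(1))
  next
    case False
    then obtain h where h: "hgt (Nd A ts) = Suc h" "h \<ge> Suc K" using Nd.prems by (cases "hgt (Nd A ts)") auto
    then obtain l t r where tr: "ts = l @ t # r" "hgt t = h" using hgt_max_child[OF h(1)] by auto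
    then have "t \<in> set ts" by simp
    from Nd.IH[OF this] tr h obtain c s where "t = fill c s" "hgt s = Suc K" by auto
    then have "Nd A ts = fill (Cx A l c r) s" using tr by simp
    then show ?thesis using \<open>hgt s = Suc K\<close> by blast
  qed
qed

definition isNd :: "tr \<Rightarrow> bool" where "isNd t \<longleftrightarrow> (\<exists>A ts. t = Nd A ts)"

lemma chain:
  "(\<exists>c1 c2 t0. t = fill c1 (fill c2 t0) \<and> c2 \<noteq> Hole \<and> lab (fill c2 t0) = lab t0) \<or>
   (\<exists>ss. length ss = hgt t \<and> distinct (map lab ss) \<and> (\<forall>s\<in>set ss. isNd s \<and> (\<exists>c. t = fill c s)))"
proof (induction t)
  case (Lf a) then show ?case by simp
next
  case (Nd A ts)
  show ?case
  proof (cases "hgt (Nd A ts) = 1")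
    case True
    then show ?thesis
      by (intro disjI2 exI[of _ "[Nd A ts]"]) (auto simp: isNd_def intro: exI[of _ Hole])
  next
    case False
    then obtain h where h: "hgt (Nd A ts) = Suc h" "h > 0" by (cases "hgt (Nd A ts)") auto
    then obtain l t r where tr: "ts = l @ t # r" "hgt t = h" using hgt_max_child[OF h(1)] by auto
    then have "t \<in> set ts" by simp
    from Nd.IH[OF this] show ?thesis
    proof
      assume "\<exists>c1 c2 t0. t = fill c1 (fill c2 t0) \<and> c2 \<noteq> Hole \<and> lab (fill c2 t0) = lab t0"
      then obtain c1 c2 t0 where "t = fill c1 (fill c2 t0)" "c2 \<noteq> Hole" "lab (fill c2 t0) = lab t0" by blast
      then have "Nd A ts = fill (Cx A l c1 r) (fill c2 t0)" using tr by simp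
      then show ?thesis using \<open>c2 \<noteq> Hole\<close> \<open>lab (fill c2 t0) = lab t0\<close> by blast
    next
      assume "\<exists>ss. length ss = hgt t \<and> distinct (map lab ss) \<and> (\<forall>s\<in>set ss. isNd s \<and> (\<exists>c. t = fill c s))"
      then obtain ss where ss: "length ss = hgt t" "distinct (map lab ss)"
        "\<forall>s\<in>set ss. isNd s \<and> (\<exists>c. t = fill c s)" by blast
      show ?thesis
      proof (cases "lab (Nd A ts) \<in> lab ` set ss")
        case True
        then obtain s where s: "s \<in> set ss" "lab s = lab (Nd A ts)" by auto
        then obtain c where "t = fill c s" using ss(3) by blast
        then have "Nd A ts = fill (Cx A l c r) s" using tr by simp
        then have "Nd A ts = fill Hole (fill (Cx A l c r) s) \<and> Cx A l c r \<noteq> Hole \<and>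
                   lab (fill (Cx A l c r) s) = lab s" using s by simp
        then show ?thesis by blast
      next
        case False
        have "length (Nd A ts # ss) = hgt (Nd A ts)" using ss(1) tr h by simp
        moreover have "distinct (map lab (Nd A ts # ss))" using False ss(2) by simp
        moreover have "\<forall>s\<in>set (Nd A ts # ss). isNd s \<and> (\<exists>c. Nd A ts = fill c s)"
        proof
          fix s assume "s \<in> set (Nd A ts # ss)"
          then have "s = Nd A ts \<or> s \<in> set ss" by simp
          then show "isNd s \<and> (\<exists>c. Nd A ts = fill c s)"
          proof
            assume "s = Nd A ts"
            then show ?thesis by (auto simp: isNd_def intro: exI[of _ Hole])
          next
            assume "s \<in> set ss"
            then obtain c where "isNd s" "t = fill c s" using ss(3) by blast
            then have "Nd A ts = fill (Cx A l c r) s" using tr by simp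
            then show ?thesis using \<open>isNd s\<close> by blast
          qed
        qed
        ultimately show ?thesis by blast
      qed
    qed
  qed
qed

lemma sum_list_le_len: "(\<forall>x\<in>set xs. f x \<le> B) \<Longrightarrow> sum_list (map f xs) \<le> length xs * B"
  by (induction xs) auto

lemma len_bound:
  assumes "finite P"
  shows "tvalid P t \<Longrightarrow> length (yld t) \<le> (Max (insert 1 ((\<lambda>(A, \<alpha>). length \<alpha>) ` P))) ^ hgt t"
proof (induction t)
  case (Lf a) then show ?case by simp
next
  case (Nd A ts)
  let ?b = "Max (insert 1 ((\<lambda>(A, \<alpha>). length \<alpha>) ` P))"
  have fin: "finite (insert 1 ((\<lambda>(A, \<alpha>). length \<alpha>) ` P))" using assms by simp
  have b1: "1 \<le> ?b" using fin by (intro Max_ge) auto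
  define h where "h = Max (insert 0 (set (map hgt ts)))"
  have P: "(A, map troot ts) \<in> P" using Nd.prems by simp
  have "length (map troot ts) \<in> insert 1 ((\<lambda>(A, \<alpha>). length \<alpha>) ` P)" using P by force
  then have lb: "length ts \<le> ?b" using fin by (metis Max_ge length_map)
  have each: "\<forall>t\<in>set ts. length (yld t) \<le> ?b ^ h"
  proof
    fix t assume t: "t \<in> set ts"
    then have "length (yld t) \<le> ?b ^ hgt t" using Nd.IH Nd.prems by simp
    also have "hgt t \<le> h" unfolding h_def using t by (intro Max_ge) auto
    then have "?b ^ hgt t \<le> ?b ^ h" using b1 by (intro power_increasing) auto
    finally show "length (yld t) \<le> ?b ^ h" .
  qed
  have "length (yld (Nd A ts)) = sum_list (map (\<lambda>t. length (yld t)) ts)"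
    by (simp add: length_concat comp_def)
  also have "\<dots> \<le> length ts * ?b ^ h" by (rule sum_list_le_len[OF each])
  also have "\<dots> \<le> ?b * ?b ^ h" using lb by simp
  also have "\<dots> = ?b ^ hgt (Nd A ts)" by (simp add: h_def)
  finally show ?case .
qed

lemma concat_rep_snoc: "concat (replicate i y) @ y = y @ concat (replicate i y)"
  by (induction i) auto

lemma pump_tree:
  assumes "cvalid P c2 (troot t0)" "croot c2 (troot t0) = troot t0" "tvalid P t0"
  shows "tvalid P ((fill c2 ^^ i) t0) \<and> troot ((fill c2 ^^ i) t0) = troot t0 \<and>
    yld ((fill c2 ^^ i) t0) = concat (replicate i (lyc c2)) @ yld t0 @ concat (replicate i (ryc c2))"
proof (induction i)
  case 0 then show ?case using assms by simp
next
  case (Suc i)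
  then show ?case using assms
    by (simp add: valid_fill root_fill yld_fill concat_rep_snoc)
qed

theorem pumping:
  assumes "finite P"
  shows "\<exists>p. \<forall>w. w \<in> lang_cfg (P, S) \<longrightarrow> length w > p \<longrightarrow>
     (\<exists>u v x y z. w = u @ v @ x @ y @ z \<and> length (v @ x @ y) \<le> p \<and> v @ y \<noteq> [] \<and>
        ((2::nat) \<in> set (v @ x @ y) \<longleftrightarrow> 2 \<in> set x) \<and> ((1::nat) \<in> set (v @ x @ y) \<longleftrightarrow> 1 \<in> set x) \<and>
        (\<forall>i. u @ concat (replicate i v) @ x @ concat (replicate i y) @ z \<in> lang_cfg (P, S)))"
proof -
  define b where "b = Max (insert 1 ((\<lambda>(A, \<alpha>). length \<alpha>) ` P))"
  have b1: "1 \<le> b" unfolding b_def using assms by (intro Max_ge) auto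
  define lab where "lab = (\<lambda>t. (troot t, (2::nat) \<in> set (yld t), (1::nat) \<in> set (yld t)))"
  define Lb where "Lb = ((Inl ` fst ` P) :: (nat + nat) set) \<times> (UNIV :: bool set) \<times> (UNIV :: bool set)"
  have finLb: "finite Lb" unfolding Lb_def using assms by simp
  define K where "K = card Lb"
  define p where "p = b ^ Suc K"
  have lenb: "tvalid P t \<Longrightarrow> length (yld t) \<le> b ^ hgt t" for t
    unfolding b_def using len_bound[OF assms] by blast
  show ?thesis
  proof (intro exI[of _ p] allI impI)
    fix w assume w: "w \<in> lang_cfg (P, S)" and lw: "length w > p"
    define Ts where "Ts = {t. tvalid P t \<and> troot t = Inl S \<and> yld t = w}"
    have "Ts \<noteq> {}" using w lang_cfg_iff unfolding Ts_def by blast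
    then obtain t where t: "t \<in> Ts" and tmin: "\<forall>t'\<in>Ts. sz t \<le> sz t'"
      using ex_has_least_nat[of "\<lambda>t. t \<in> Ts" _ sz] by blast
    have tv: "tvalid P t" "troot t = Inl S" "yld t = w" using t unfolding Ts_def by auto
    have "hgt t > Suc K"
    proof (rule ccontr)
      assume "\<not> Suc K < hgt t"
      then have "b ^ hgt t \<le> b ^ Suc K" using b1 by (intro power_increasing) auto
      then show False using lenb[OF tv(1)] tv(3) lw unfolding p_def by simp
    qed
    then obtain c s where cs: "t = fill c s" "hgt s = Suc K" using descend[of "K" t] by auto
    from chain[of s lab] show "\<exists>u v x y z. w = u @ v @ x @ y @ z \<and> length (v @ x @ y) \<le> p \<and> v @ y \<noteq> [] \<and>
        ((2::nat) \<in> set (v @ x @ y) \<longleftrightarrow> 2 \<in> set x) \<and> ((1::nat) \<in> set (v @ x @ y) \<longleftrightarrow> 1 \<in> set x) \<and>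
        (\<forall>i. u @ concat (replicate i v) @ x @ concat (replicate i y) @ z \<in> lang_cfg (P, S))"
    proof
      assume "\<exists>ss. length ss = hgt s \<and> distinct (map lab ss) \<and> (\<forall>s'\<in>set ss. isNd s' \<and> (\<exists>c. s = fill c s'))"
      then obtain ss where ss: "length ss = hgt s" "distinct (map lab ss)"
        "\<forall>s'\<in>set ss. isNd s' \<and> (\<exists>c. s = fill c s')" by blast
      have "lab ` set ss \<subseteq> Lb"
      proof
        fix l assume "l \<in> lab ` set ss"
        then obtain s' where s': "s' \<in> set ss" "l = lab s'" by auto
        then obtain c' A ts where "s = fill c' s'" "s' = Nd A ts" using ss(3) unfolding isNd_def by blast
        then have "tvalid P (Nd A ts)" using tv(1) cs(1) valid_fill by metis
        then have "A \<in> fst ` P" by force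
        then show "l \<in> Lb" using s' \<open>s' = Nd A ts\<close> unfolding Lb_def lab_def by simp
      qed
      then have "card (lab ` set ss) \<le> K" unfolding K_def using finLb by (rule card_mono[rotated])
      moreover have "card (lab ` set ss) = Suc K"
        using ss(1,2) cs(2) by (metis distinct_card length_map set_map)
      ultimately show ?thesis by simp
    next
      assume "\<exists>c1 c2 t0. s = fill c1 (fill c2 t0) \<and> c2 \<noteq> Hole \<and> lab (fill c2 t0) = lab t0"
      then obtain c1 c2 t0 where c12: "s = fill c1 (fill c2 t0)" "c2 \<noteq> Hole" "lab (fill c2 t0) = lab t0" by blast
      have tfull: "t = fill c (fill c1 (fill c2 t0))" using cs c12 by simp
      have vc: "cvalid P c (troot (fill c1 (fill c2 t0)))" "cvalid P c1 (troot (fill c2 t0))"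
        "cvalid P c2 (troot t0)" "tvalid P t0"
        using tv(1) unfolding tfull valid_fill by auto
      have rt: "croot c2 (troot t0) = troot t0" using c12(3) unfolding lab_def root_fill by simp
      define u where "u = lyc c @ lyc c1"
      define v where "v = lyc c2"
      define x where "x = yld t0"
      define y where "y = ryc c2"
      define z where "z = ryc c1 @ ryc c"
      have wd: "w = u @ v @ x @ y @ z" using tv(3) unfolding tfull by (simp add: yld_fill u_def v_def x_def y_def z_def)
      have vxy: "yld (fill c2 t0) = v @ x @ y" by (simp add: yld_fill v_def x_def y_def)
      have "length (v @ x @ y) \<le> b ^ hgt (fill c2 t0)"
        using lenb[of "fill c2 t0"] vc vxy by (simp add: valid_fill)
      also have "hgt (fill c2 t0) \<le> hgt s" unfolding c12(1) by (rule hgt_fill)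
      then have "b ^ hgt (fill c2 t0) \<le> p" unfolding p_def using cs(2) b1 by (intro power_increasing) auto
      finally have lp: "length (v @ x @ y) \<le> p" .
      have labs: "((2::nat) \<in> set (v @ x @ y) \<longleftrightarrow> 2 \<in> set x) \<and> ((1::nat) \<in> set (v @ x @ y) \<longleftrightarrow> 1 \<in> set x)"
        using c12(3) vxy unfolding lab_def x_def by simp
      have ne: "v @ y \<noteq> []"
      proof
        assume vy: "v @ y = []"
        let ?t' = "fill c (fill c1 t0)"
        have "?t' \<in> Ts"
        proof -
          have "tvalid P ?t'" using vc rt by (simp add: valid_fill root_fill)
          moreover have "troot ?t' = Inl S" using tv(2) rt unfolding tfull by (simp add: root_fill)
          moreover have "yld ?t' = w" using tv(3) vy unfolding tfull by (simp add: yld_fill v_def y_def)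
          ultimately show ?thesis unfolding Ts_def by simp
        qed
        moreover have "sz ?t' < sz t"
          unfolding tfull by (intro sz_fill_mono sz_fill c12(2))
        ultimately show False using tmin by fastforce
      qed
      have pumped: "u @ concat (replicate i v) @ x @ concat (replicate i y) @ z \<in> lang_cfg (P, S)" for i
      proof -
        note pt = pump_tree[OF vc(3) rt vc(4), of i]
        let ?T = "fill c (fill c1 ((fill c2 ^^ i) t0))"
        have "tvalid P ?T" using pt vc rt by (simp add: valid_fill root_fill)
        moreover have "troot ?T = Inl S" using tv(2) pt rt unfolding tfull by (simp add: root_fill)
        moreover have "yld ?T = u @ concat (replicate i v) @ x @ concat (replicate i y) @ z"
          using pt by (simp add: yld_fill u_def v_def x_def y_def z_def)
        ultimately show ?thesis using lang_cfg_iff by blast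
      qed
      show ?thesis using wd lp ne labs pumped by blast
    qed
  qed
qed

lemma sorted_const: "(\<forall>a\<in>set xs. a = c) \<Longrightarrow> sorted xs"
  by (induction xs) auto

lemma set_concat_rep: "set (concat (replicate i v)) \<subseteq> set v"
  by (induction i) auto

lemma count_concat_rep: "count_list (concat (replicate i v)) c = i * count_list v c"
  by (induction i) auto

lemma sorted12:
  assumes "sorted xs" "set xs \<subseteq> {1, 2::nat}"
  shows "xs = replicate (count_list xs 1) 1 @ replicate (count_list xs 2) 2"
  using assms
proof (induction xs)
  case Nil then show ?case by simp
next
  case (Cons a xs)
  then have IH: "xs = replicate (count_list xs 1) 1 @ replicate (count_list xs 2) 2" by simp
  have a: "a = 1 \<or> a = 2" using Cons.prems by auto
  show ?case
  proof (cases "a = 1")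
    case True
    then show ?thesis using IH by simp
  next
    case False
    then have a2: "a = 2" using a by simp
    then have "\<forall>b\<in>set xs. b = 2" using Cons.prems by fastforce
    then have "1 \<notin> set xs" by auto
    then have "count_list xs 1 = 0" by (simp add: count_list_0_iff)
    then show ?thesis using IH a2 by simp
  qed
qed

lemma len12: "set xs \<subseteq> {1, 2::nat} \<Longrightarrow> length xs = count_list xs 1 + count_list xs 2"
  by (induction xs) auto

lemma sorted_replace:
  fixes u v x y z V Y :: "nat list"
  assumes ws: "sorted (u @ v @ x @ y @ z)" and sV: "sorted V" and sY: "sorted Y"
    and SV: "set V \<subseteq> set v" "set Y \<subseteq> set y"
  shows "sorted (u @ V @ x @ Y @ z)"
proof -
  have a: "sorted u" "sorted x" "sorted z"
    "\<forall>a\<in>set u. \<forall>b\<in>set v \<union> set x \<union> set y \<union> set z. a \<le> b"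
    "\<forall>a\<in>set v. \<forall>b\<in>set x \<union> set y \<union> set z. a \<le> b"
    "\<forall>a\<in>set x. \<forall>b\<in>set y \<union> set z. a \<le> b"
    "\<forall>a\<in>set y. \<forall>b\<in>set z. a \<le> b"
    using ws by (simp_all add: sorted_append Un_assoc)
  show ?thesis
    unfolding sorted_append set_append using a sV sY SV by (auto 0 3)
qed

lemma pumped_sorted:
  assumes w: "w = u @ v @ x @ y @ z" "sorted w" "set w \<subseteq> {1, 2::nat}"
    and l2: "(2 \<in> set (v @ x @ y) \<longleftrightarrow> 2 \<in> set x)" and l1: "(1 \<in> set (v @ x @ y) \<longleftrightarrow> 1 \<in> set x)"
  shows "sorted (u @ concat (replicate i v) @ x @ concat (replicate i y) @ z)"
proof -
  have sv: "set v \<subseteq> {1,2}" "set y \<subseteq> {1,2}" using w by auto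
  have ws: "sorted (u @ v @ x @ y @ z)" using w by simp
  have vx: "\<forall>a\<in>set v. \<forall>b\<in>set x. a \<le> b" and xy: "\<forall>a\<in>set x. \<forall>b\<in>set y. a \<le> b"
    using ws by (simp_all add: sorted_append)
  obtain cv cy where cv: "\<forall>a\<in>set v. a = cv" and cy: "\<forall>a\<in>set y. a = cy"
  proof (cases "2 \<in> set x")
    case False
    then have "2 \<notin> set v" "2 \<notin> set y" using l2 by auto
    then have "\<forall>a\<in>set v. a = 1" "\<forall>a\<in>set y. a = 1" using sv by auto
    then show ?thesis using that by blast
  next
    case True
    show ?thesis
    proof (cases "1 \<in> set x")
      case False
      then have "1 \<notin> set v" "1 \<notin> set y" using l1 by auto
      then have "\<forall>a\<in>set v. a = 2" "\<forall>a\<in>set y. a = 2" using sv by auto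
      then show ?thesis using that by blast
    next
      case c1: True
      have "\<forall>a\<in>set v. a \<le> 1" using vx c1 by blast
      then have "\<forall>a\<in>set v. a = 1" using sv by fastforce
      moreover have "\<forall>a\<in>set y. 2 \<le> a" using xy True by blast
      then have "\<forall>a\<in>set y. a = 2" using sv by fastforce
      ultimately show ?thesis using that by blast
    qed
  qed
  have SV: "set (concat (replicate i v)) \<subseteq> set v" "set (concat (replicate i y)) \<subseteq> set y"
    by (rule set_concat_rep)+
  have sV: "sorted (concat (replicate i v))" using cv SV(1) by (intro sorted_const[of _ cv]) blast
  have sY: "sorted (concat (replicate i y))" using cy SV(2) by (intro sorted_const[of _ cy]) blast
  show ?thesis by (rule sorted_replace[OF ws sV sY SV])
qed

lemma count_rep: "count_list (replicate k a) a = k"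
  by (induction k) auto

theorem part2: "\<exists>L \<in> TM_1state. \<not> context_free L"
proof (intro bexI[of _ "lang_tm1 Mx"])
  show "lang_tm1 Mx \<in> TM_1state" unfolding TM_1state_def using wf_Mx by blast
  show "\<not> context_free (lang_tm1 Mx)"
  proof
    assume "context_free (lang_tm1 Mx)"
    then obtain P S where fin: "finite P" and LG: "lang_cfg (P, S) = lang_tm1 Mx"
      unfolding context_free_def by (metis fst_conv surj_pair)
    from pumping[OF fin, of S] obtain p where pump: "\<forall>w. w \<in> lang_cfg (P, S) \<longrightarrow> length w > p \<longrightarrow>
     (\<exists>u v x y z. w = u @ v @ x @ y @ z \<and> length (v @ x @ y) \<le> p \<and> v @ y \<noteq> [] \<and>
        ((2::nat) \<in> set (v @ x @ y) \<longleftrightarrow> 2 \<in> set x) \<and> ((1::nat) \<in> set (v @ x @ y) \<longleftrightarrow> 1 \<in> set x) \<and>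
        (\<forall>i. u @ concat (replicate i v) @ x @ concat (replicate i y) @ z \<in> lang_cfg (P, S)))" by blast
    define n where "n = Suc p"
    define w where "w = replicate (2 ^ n) (1::nat) @ replicate n 2"
    have inL: "xs \<in> lang_cfg (P, S) \<longleftrightarrow> set xs \<subseteq> {1,2} \<and> halts_tm1 Mx xs" for xs
      unfolding LG lang_tm1_def by auto
    have "p < 2 ^ p" by (rule less_exp)
    then have "p < 2 * 2 ^ p" by linarith
    then have pn: "p < 2 ^ n" by (simp add: n_def)
    have hw: "halts_tm1 Mx w" unfolding w_def by (rule char[THEN iffD2]) simp
    have wL: "w \<in> lang_cfg (P, S)" unfolding inL using hw by (auto simp: w_def)
    have lw: "length w > p" unfolding w_def n_def by simp
    obtain u v x y z where d: "w = u @ v @ x @ y @ z" "length (v @ x @ y) \<le> p" "v @ y \<noteq> []"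
        "((2::nat) \<in> set (v @ x @ y) \<longleftrightarrow> 2 \<in> set x)" "((1::nat) \<in> set (v @ x @ y) \<longleftrightarrow> 1 \<in> set x)"
        "\<forall>i. u @ concat (replicate i v) @ x @ concat (replicate i y) @ z \<in> lang_cfg (P, S)"
      using pump[rule_format, OF wL lw] by (elim exE conjE) (rule that, assumption+)
    define pw where "pw i = u @ concat (replicate i v) @ x @ concat (replicate i y) @ z" for i
    have ws: "sorted w" "set w \<subseteq> {1,2}" unfolding w_def by (auto simp: sorted_append)
    have key: "2 ^ count_list (pw i) 2 \<le> count_list (pw i) 1" for i
    proof -
      have sp: "sorted (pw i)" unfolding pw_def by (rule pumped_sorted[OF d(1) ws d(4,5)])
      have st: "set (pw i) \<subseteq> {1,2}" using ws(2) set_concat_rep[of i v] set_concat_rep[of i y]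
        unfolding pw_def d(1) by auto
      have "pw i \<in> lang_cfg (P, S)" unfolding pw_def using d(6) by simp
      then have "halts_tm1 Mx (pw i)" using inL[of "pw i"] by simp
      then have "halts_tm1 Mx (replicate (count_list (pw i) 1) 1 @ replicate (count_list (pw i) 2) 2)"
        using sorted12[OF sp st] by simp
      then show ?thesis by (rule char[THEN iffD1])
    qed
    have cpw: "count_list (pw i) c = count_list u c + i * count_list v c + count_list x c + i * count_list y c + count_list z c" for i c
      unfolding pw_def by (simp add: count_concat_rep)
    have cw: "count_list w c = count_list u c + count_list v c + count_list x c + count_list y c + count_list z c" for c
      unfolding d(1) by simp
    have cw1: "count_list w 1 = 2 ^ n" and cw2: "count_list w 2 = n" unfolding w_def by (auto simp: count_rep)
    have svy: "set (v @ y) \<subseteq> {1,2}" using ws(2) unfolding d(1) by auto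
    have lvy: "length (v @ y) = count_list (v @ y) 1 + count_list (v @ y) 2" by (rule len12[OF svy])
    have lvy2: "length (v @ y) \<le> p" using d(2) by simp
    show False
    proof (cases "count_list (v @ y) 2 = 0")
      case True
      have "length (v @ y) > 0" using d(3) by simp
      then have "count_list (v @ y) 1 \<ge> 1" using lvy True by linarith
      have c2: "count_list (pw 0) 2 = n" using cpw[of 0 2] cw[of 2] cw2 True by simp
      have c1: "count_list (pw 0) 1 < 2 ^ n" using cpw[of 0 1] cw[of 1] cw1 \<open>count_list (v @ y) 1 \<ge> 1\<close> by simp
      show False using key[of 0] c1 c2 by simp
    next
      case False
      have F': "count_list v 2 + count_list y 2 \<ge> 1" using False by simp linarith
      have c2: "count_list (pw 2) 2 \<ge> Suc n" using cpw[of 2 2] cw[of 2] cw2 F' by linarith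
      have "count_list (pw 2) 1 = 2 ^ n + count_list (v @ y) 1" using cpw[of 2 1] cw[of 1] cw1
        by (simp only: count_list_append)
      also have "\<dots> < 2 ^ n + 2 ^ n" using lvy lvy2 pn by simp
      finally have c1: "count_list (pw 2) 1 < 2 ^ Suc n" by simp
      have "2 ^ Suc n \<le> (2::nat) ^ count_list (pw 2) 2" using c2 by (intro power_increasing) auto
      then show False using key[of 2] c1 by simp
    qed
  qed
qed

theorem theorem4:
  shows "(regular {[1]} \<and> {[1]} \<notin> TM_1state)
       \<and> (\<exists>L \<in> TM_1state. \<not> context_free L)"
  using part1 part2 by blast

end
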